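(* There is no integer $k$ such that the class of finite $1$-planar graphs has Assouad–Nagata dimension at most $k$.
   Context: A graph is $1$-planar if it can be drawn in the plane with at most one crossing on each edge. Graphs are unweighted metric spaces with the shortest-path distance. For a metric space $(X,d)$, a family $\mathcal U$ of subsets is $D$-bounded if every member has diameter at most $D$, and $r$-disjoint if points in different members are at distance $>r$. A function $D:\mathbb{R}^+\to\mathbb{R}^+$ is an $n$-dimensional control function for $X$ if for every $r>0$ there is a cover $\mathcal U=\mathcal U_1\cup\dots\cup\mathcal U_{n+1}$ of $X$ with each $\mathcal U_i$ $r$-disjoint and each member $D(r)$-bounded. A class has Assouad–Nagata dimension at most $n$ if there is a constant $c>0$ such that $D(r)=cr$ is an $n$-dimensional control function for every member. *)

theory Defs
  imports "HOL-Analysis.Analysis" "HOL-Library.Extended_Real"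
begin

definition finite_graph :: "'a set \<Rightarrow> 'a set set \<Rightarrow> bool" where
  "finite_graph V E \<longleftrightarrow> finite V \<and> (\<forall>e\<in>E. \<exists>u v. e = {u, v} \<and> u \<noteq> v \<and> u \<in> V \<and> v \<in> V)"

text \<open>It is a 1-planar drawing if every edge has at most one crossing,
i.e. there is at most one pair (other edge f, point z) with z an interior point of both.\<close>
definition edge_interior :: "(real \<Rightarrow> complex) \<Rightarrow> complex set" where
  "edge_interior g = path_image g - {pathstart g, pathfinish g}"

definition one_planar_drawing ::
  "'a set \<Rightarrow> 'a set set \<Rightarrow> ('a \<Rightarrow> complex) \<Rightarrow> ('a set \<Rightarrow> real \<Rightarrow> complex) \<Rightarrow> bool" where
  "one_planar_drawing V E pos curve \<longleftrightarrow>
     inj_on pos V \<and>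
     (\<forall>e\<in>E. arc (curve e) \<and> {pathstart (curve e), pathfinish (curve e)} = pos ` e \<and>
              edge_interior (curve e) \<inter> pos ` V = {}) \<and>
     (\<forall>e\<in>E. finite {(f, z). f \<in> E \<and> f \<noteq> e \<and>
                     z \<in> edge_interior (curve e) \<inter> edge_interior (curve f)} \<and>
            card {(f, z). f \<in> E \<and> f \<noteq> e \<and>
                     z \<in> edge_interior (curve e) \<inter> edge_interior (curve f)} \<le> 1)"

definition one_planar :: "'a set \<Rightarrow> 'a set set \<Rightarrow> bool" where
  "one_planar V E \<longleftrightarrow> (\<exists>pos curve. one_planar_drawing V E pos curve)"

text \<open>Shortest-path distance (\<infinity> between different components).\<close>
definition gdist :: "'a set set \<Rightarrow> 'a \<Rightarrow> 'a \<Rightarrow> enat" where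
  "gdist E u v = (INF n \<in> {n. \<exists>w :: nat \<Rightarrow> 'a. w 0 = u \<and> w n = v \<and>
                                  (\<forall>i<n. {w i, w (Suc i)} \<in> E)}. enat n)"

definition gd :: "'a set set \<Rightarrow> 'a \<Rightarrow> 'a \<Rightarrow> ereal" where
  "gd E u v = ereal_of_enat (gdist E u v)"

definition bounded_family :: "'a set set \<Rightarrow> real \<Rightarrow> 'a set set \<Rightarrow> bool" where
  "bounded_family E D \<U> \<longleftrightarrow> (\<forall>U\<in>\<U>. \<forall>x\<in>U. \<forall>y\<in>U. gd E x y \<le> ereal D)"

definition disjoint_family_r :: "'a set set \<Rightarrow> real \<Rightarrow> 'a set set \<Rightarrow> bool" where
  "disjoint_family_r E r \<U> \<longleftrightarrow>
     (\<forall>U\<in>\<U>. \<forall>U'\<in>\<U>. U \<noteq> U' \<longrightarrow> (\<forall>x\<in>U. \<forall>y\<in>U'. gd E x y > ereal r))"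

definition control_function :: "'a set \<Rightarrow> 'a set set \<Rightarrow> int \<Rightarrow> (real \<Rightarrow> real) \<Rightarrow> bool" where
  "control_function V E n D \<longleftrightarrow>
     (\<forall>r>0. \<exists>\<U> :: int \<Rightarrow> 'a set set.
        (\<forall>i\<in>{0..n}. (\<forall>U\<in>\<U> i. U \<subseteq> V) \<and> disjoint_family_r E r (\<U> i)
                     \<and> bounded_family E (D r) (\<U> i)) \<and>
        V \<subseteq> (\<Union>i\<in>{0..n}. \<Union>(\<U> i)))"

definition AN_dim_le :: "('a set \<times> 'a set set) set \<Rightarrow> int \<Rightarrow> bool" where
  "AN_dim_le \<C> n \<longleftrightarrow> (\<exists>c>0. \<forall>(V, E)\<in>\<C>. control_function V E n (\<lambda>r. c * r))"

text \<open>The class of finite 1-planar graphs (every finite graph is isomorphic to one on nat).\<close>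
definition finite_one_planar_graphs :: "(nat set \<times> nat set set) set" where
  "finite_one_planar_graphs = {(V, E). finite_graph V E \<and> one_planar V E}"

end

theory Submission
  imports Defs "HOL-Computational_Algebra.Primes" "HOL-Library.FuncSet"
begin



definition walk :: "'a set set \<Rightarrow> 'a \<Rightarrow> 'a \<Rightarrow> nat \<Rightarrow> bool" where
  "walk E u v n \<longleftrightarrow> (\<exists>w :: nat \<Rightarrow> 'a. w 0 = u \<and> w n = v \<and> (\<forall>i<n. {w i, w (Suc i)} \<in> E))"

lemma walk_refl: "walk E u u 0"
  unfolding walk_def by (rule exI[of _ "\<lambda>_. u"]) simp

lemma walk_edge: "{u, v} \<in> E \<Longrightarrow> walk E u v 1"
  unfolding walk_def by (rule exI[of _ "\<lambda>i. if i = 0 then u else v"]) simp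

lemma walk_trans:
  assumes "walk E u v n" "walk E v x m" shows "walk E u x (n + m)"
proof -
  obtain w1 where w1: "w1 0 = u" "w1 n = v" "\<forall>i<n. {w1 i, w1 (Suc i)} \<in> E"
    using assms(1) unfolding walk_def by blast
  obtain w2 where w2: "w2 0 = v" "w2 m = x" "\<forall>i<m. {w2 i, w2 (Suc i)} \<in> E"
    using assms(2) unfolding walk_def by blast
  define w where "w = (\<lambda>i. if i \<le> n then w1 i else w2 (i - n))"
  have "\<forall>i<n+m. {w i, w (Suc i)} \<in> E"
  proof (intro allI impI)
    fix i assume i: "i < n + m"
    show "{w i, w (Suc i)} \<in> E"
    proof (cases "i < n")
      case True then show ?thesis using w1 by (auto simp: w_def)
    next
      case False
      then have "i - n < m" "Suc i - n = Suc (i - n)" using i by auto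
      then show ?thesis using w2 False w1(2) by (auto simp: w_def)
    qed
  qed
  moreover have "w 0 = u" "w (n+m) = x" using w1 w2 by (auto simp: w_def)
  ultimately show ?thesis unfolding walk_def by blast
qed

lemma walk_sym:
  assumes "walk E u v n" shows "walk E v u n"
proof -
  obtain w where w: "w 0 = u" "w n = v" "\<forall>i<n. {w i, w (Suc i)} \<in> E"
    using assms unfolding walk_def by blast
  have "\<forall>i<n. {w (n - i), w (n - Suc i)} \<in> E"
  proof (intro allI impI)
    fix i assume "i < n"
    then have "n - i = Suc (n - Suc i)" "n - Suc i < n" by auto
    then show "{w (n - i), w (n - Suc i)} \<in> E" using w(3) by (metis insert_commute)
  qed
  then show ?thesis unfolding walk_def using w
    by (intro exI[of _ "\<lambda>i. w (n - i)"]) auto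
qed

lemma walk_lipschitz:
  fixes \<phi> :: "'a \<Rightarrow> real"
  assumes "walk E u v n" and lip: "\<And>x y. {x, y} \<in> E \<Longrightarrow> \<bar>\<phi> x - \<phi> y\<bar> \<le> \<alpha>"
  shows "\<bar>\<phi> u - \<phi> v\<bar> \<le> n * \<alpha>"
proof -
  obtain w where w: "w 0 = u" "w n = v" "\<forall>i<n. {w i, w (Suc i)} \<in> E"
    using assms unfolding walk_def by blast
  have "j \<le> n \<Longrightarrow> \<bar>\<phi> (w 0) - \<phi> (w j)\<bar> \<le> j * \<alpha>" for j
  proof (induction j)
    case 0 then show ?case by simp
  next
    case (Suc j)
    then have "\<bar>\<phi> (w j) - \<phi> (w (Suc j))\<bar> \<le> \<alpha>" using w(3) lip by auto
    with Suc show ?case by (auto simp: algebra_simps)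
  qed
  then show ?thesis using w by auto
qed

lemma gdist_cases:
  "(\<not> (\<exists>n. walk E u v n) \<and> gdist E u v = \<infinity>) \<or> (\<exists>n. walk E u v n \<and> gdist E u v = enat n)"
proof (cases "\<exists>n. walk E u v n")
  case False
  then have "{n. \<exists>w :: nat \<Rightarrow> 'a. w 0 = u \<and> w n = v \<and> (\<forall>i<n. {w i, w (Suc i)} \<in> E)} = {}"
    unfolding walk_def by auto
  then show ?thesis using False unfolding gdist_def by (simp add: Inf_enat_def)
next
  case True
  let ?S = "enat ` {n. walk E u v n}"
  have eq: "gdist E u v = Inf ?S" unfolding gdist_def walk_def by (simp add: image_def)
  have "?S \<noteq> {}" using True by auto
  then obtain m where "enat m \<in> ?S" by auto
  then have "(LEAST x. x \<in> ?S) \<in> ?S" by (rule LeastI)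
  then have "Inf ?S \<in> ?S" unfolding Inf_enat_def by auto
  then show ?thesis using eq by auto
qed

lemma gd_le_walk: "walk E u v n \<Longrightarrow> gd E u v \<le> ereal n"
proof -
  assume "walk E u v n"
  then have "gdist E u v \<le> enat n" unfolding gdist_def walk_def by (intro INF_lower) auto
  then show ?thesis unfolding gd_def by (metis ereal_of_enat_le_iff ereal_of_enat_simps(1))
qed

lemma gd_le_ereal_walk:
  assumes "gd E u v \<le> ereal x" shows "\<exists>n. walk E u v n \<and> real n \<le> x"
  using gdist_cases[of E u v] assms unfolding gd_def by auto

lemma gd_ge:
  assumes "\<And>n. walk E u v n \<Longrightarrow> y \<le> real n" shows "ereal y \<le> gd E u v"
  using gdist_cases[of E u v] assms unfolding gd_def by auto

lemma gd_sym: "gd E u v = gd E v u"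
  using gdist_cases[of E u v] gdist_cases[of E v u] walk_sym[of E u v] walk_sym[of E v u]
  unfolding gd_def
  by (metis antisym gd_def gd_le_walk ereal_of_enat_simps(1))




lemma no_control:
  fixes V :: "'a set" and E :: "'a set set" and R :: "'a set" and c r :: real and k :: int
  assumes finV: "finite V" and RV: "R \<subseteq> V" and Rne: "R \<noteq> {}" and r: "r > 0"
  and growth: "\<And>A. A \<subseteq> V \<Longrightarrow> (\<forall>x\<in>A. \<forall>y\<in>A. gd E x y \<le> ereal (c*r)) \<Longrightarrow>
      (nat (k+1) + 1) * card (A \<inter> R) \<le> card ({v\<in>V. \<exists>a\<in>A. gd E a v \<le> ereal (r/2)} \<inter> R)"
  shows "\<not> control_function V E k (\<lambda>r. c*r)"
proof
  assume cf: "control_function V E k (\<lambda>r. c*r)"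
  have "\<exists>U :: int \<Rightarrow> 'a set set. (\<forall>i\<in>{0..k}. (\<forall>X\<in>U i. X \<subseteq> V) \<and> disjoint_family_r E r (U i) \<and> bounded_family E (c*r) (U i)) \<and>
        V \<subseteq> (\<Union>i\<in>{0..k}. \<Union>(U i))"
    using spec[OF cf[unfolded control_function_def], of r] r by (rule mp)
  then obtain U :: "int \<Rightarrow> 'a set set" where
    UU: "(\<forall>i\<in>{0..k}. (\<forall>X\<in>U i. X \<subseteq> V) \<and> disjoint_family_r E r (U i) \<and> bounded_family E (c*r) (U i)) \<and>
        V \<subseteq> (\<Union>i\<in>{0..k}. \<Union>(U i))" by (rule exE)
  have U: "\<forall>i\<in>{0..k}. (\<forall>X\<in>U i. X \<subseteq> V) \<and> disjoint_family_r E r (U i) \<and> bounded_family E (c*r) (U i)"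
    using UU by (rule conjunct1)
  have cov: "V \<subseteq> (\<Union>i\<in>{0..k}. \<Union>(U i))" using UU by (rule conjunct2)
  define Nb where "Nb X = {v\<in>V. \<exists>a\<in>X. gd E a v \<le> ereal (r/2)}" for X
  define K where "K = nat (k+1)"
  have finU: "finite (U i)" if "i \<in> {0..k}" for i
  proof -
    have "\<forall>X\<in>U i. X \<subseteq> V" using U that by blast
    then have "U i \<subseteq> Pow V" by auto
    then show ?thesis using finV by (meson finite_Pow_iff finite_subset)
  qed
  have finR: "finite R" using finV RV finite_subset by blast
  have disj: "Nb X \<inter> Nb Y = {}" if i: "i \<in> {0..k}" and X: "X \<in> U i" and Y: "Y \<in> U i" and XY: "X \<noteq> Y" for i X Y
  proof (rule ccontr)
    assume "Nb X \<inter> Nb Y \<noteq> {}"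
    then obtain v a b where a: "a \<in> X" "gd E a v \<le> ereal (r/2)" and b: "b \<in> Y" "gd E b v \<le> ereal (r/2)"
      unfolding Nb_def by auto
    obtain n1 where n1: "walk E a v n1" "real n1 \<le> r/2" using gd_le_ereal_walk[OF a(2)] by auto
    obtain n2 where n2: "walk E b v n2" "real n2 \<le> r/2" using gd_le_ereal_walk[OF b(2)] by auto
    have "walk E a b (n1 + n2)" using walk_trans[OF n1(1) walk_sym[OF n2(1)]] .
    then have "gd E a b \<le> ereal (real (n1+n2))" by (rule gd_le_walk)
    also have "\<dots> \<le> ereal r" using n1 n2 by simp
    finally have "gd E a b \<le> ereal r" .
    moreover have "disjoint_family_r E r (U i)" using U i by blast
    then have "gd E a b > ereal r" using X Y XY a(1) b(1) unfolding disjoint_family_r_def by blast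
    ultimately show False by simp
  qed
  have step1: "card R \<le> (\<Sum>i\<in>{0..k}. \<Sum>X\<in>U i. card (X \<inter> R))"
  proof -
    have "R \<subseteq> (\<Union>i\<in>{0..k}. \<Union>X\<in>U i. X \<inter> R)" using cov RV by blast
    moreover have "finite (\<Union>i\<in>{0..k}. \<Union>X\<in>U i. X \<inter> R)" using finR by (rule finite_subset[rotated]) auto
    ultimately have "card R \<le> card (\<Union>i\<in>{0..k}. \<Union>X\<in>U i. X \<inter> R)" by (rule card_mono[rotated])
    also have "\<dots> \<le> (\<Sum>i\<in>{0..k}. card (\<Union>X\<in>U i. X \<inter> R))" by (rule card_UN_le) simp
    also have "\<dots> \<le> (\<Sum>i\<in>{0..k}. \<Sum>X\<in>U i. card (X \<inter> R))"
      by (rule sum_mono) (rule card_UN_le, rule finU)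
    finally show ?thesis .
  qed
  have step2: "(\<Sum>X\<in>U i. card (Nb X \<inter> R)) \<le> card R" if i: "i \<in> {0..k}" for i
  proof -
    have "(\<Sum>X\<in>U i. card (Nb X \<inter> R)) = card (\<Union>X\<in>U i. Nb X \<inter> R)"
      using disj[OF i] finU[OF i] finR by (subst card_UN_disjoint) auto
    also have "\<dots> \<le> card R" using finR by (intro card_mono) auto
    finally show ?thesis .
  qed
  have step3: "(K + 1) * card (X \<inter> R) \<le> card (Nb X \<inter> R)" if i: "i \<in> {0..k}" and X: "X \<in> U i" for i X
  proof -
    have "X \<subseteq> V" using U i X by auto
    moreover have "bounded_family E (c*r) (U i)" using U i by blast
    then have "\<forall>x\<in>X. \<forall>y\<in>X. gd E x y \<le> ereal (c*r)"
      using X unfolding bounded_family_def by blast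
    ultimately show ?thesis using growth[of X] unfolding K_def Nb_def by simp
  qed
  have "(K + 1) * card R \<le> (K + 1) * (\<Sum>i\<in>{0..k}. \<Sum>X\<in>U i. card (X \<inter> R))"
    using step1 by (rule mult_le_mono2)
  also have "\<dots> = (\<Sum>i\<in>{0..k}. \<Sum>X\<in>U i. (K+1) * card (X \<inter> R))"
    by (simp only: sum_distrib_left)
  also have "\<dots> \<le> (\<Sum>i\<in>{0..k}. \<Sum>X\<in>U i. card (Nb X \<inter> R))"
    using step3 by (intro sum_mono) auto
  also have "\<dots> \<le> (\<Sum>i\<in>{0..k}. card R)" using step2 by (intro sum_mono) auto
  also have "\<dots> = K * card R" by (simp add: K_def)
  finally have "(K + 1) * card R \<le> K * card R" .
  moreover have "card R > 0" using finR Rne by (simp add: card_gt_0_iff)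
  ultimately show False by simp
qed




definition boxP :: "nat \<Rightarrow> nat \<Rightarrow> (nat \<Rightarrow> nat) set" where
  "boxP d N = PiE {..<d} (\<lambda>_. {..<N})"

definition Dil :: "nat \<Rightarrow> nat \<Rightarrow> nat \<Rightarrow> (nat \<Rightarrow> nat) set \<Rightarrow> (nat \<Rightarrow> nat) set" where
  "Dil d N i S = {y \<in> boxP d N. \<exists>x\<in>S. \<bar>int (x i) - int (y i)\<bar> \<le> 1 \<and> (\<forall>j. j \<noteq> i \<longrightarrow> x j = y j)}"

lemma finite_boxP: "finite (boxP d N)"
  unfolding boxP_def by (rule finite_PiE) auto

lemma boxP_coord: "x \<in> boxP d N \<Longrightarrow> i < d \<Longrightarrow> x i < N"
  unfolding boxP_def by (metis PiE_mem lessThan_iff)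

lemma boxP_upd: "x \<in> boxP d N \<Longrightarrow> i < d \<Longrightarrow> v < N \<Longrightarrow> x(i := v) \<in> boxP d N"
  unfolding boxP_def by (auto simp: PiE_iff extensional_def)

lemma dil_fiber:
  assumes SP: "S \<subseteq> boxP d N" and i: "i < d" and N: "N \<ge> D + 2"
    and spread: "\<forall>x\<in>S. \<forall>y\<in>S. \<bar>int (x i) - int (y i)\<bar> \<le> int D"
  shows "(D + 2) * card S \<le> (D + 1) * card (Dil d N i S)"
proof -
  define \<kappa> where "\<kappa> x = x(i := 0)" for x :: "nat \<Rightarrow> nat"
  define C where "C = \<kappa> ` S"
  define Sk where "Sk k = {x\<in>S. \<kappa> x = k}" for k
  define vals where "vals k = (\<lambda>x. x i) ` Sk k" for k
  define Mx where "Mx k = Max (vals k)" for k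
  define Mn where "Mn k = Min (vals k)" for k
  have finS: "finite S" using SP finite_boxP finite_subset by blast
  have finC: "finite C" using finS C_def by simp
  have finSk: "finite (Sk k)" for k using finS unfolding Sk_def by simp
  have finvals: "finite (vals k)" for k using finSk unfolding vals_def by simp
  have nevals: "vals k \<noteq> {}" if "k \<in> C" for k using that unfolding vals_def Sk_def C_def by auto
  have Sk_eq: "x = (\<kappa> x)(i := x i)" for x unfolding \<kappa>_def by simp
  have inj: "inj_on (\<lambda>x. x i) (Sk k)" for k
    unfolding inj_on_def Sk_def by (metis (mono_tags, lifting) Sk_eq mem_Collect_eq)
  have cardSk: "card (Sk k) \<le> D + 1" if k: "k \<in> C" for k
  proof -
    have "vals k \<subseteq> {Mn k .. Mn k + D}"
    proof
      fix v assume v: "v \<in> vals k"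
      have "Mn k \<in> vals k" unfolding Mn_def using finvals nevals[OF k] by (rule Min_in)
      then obtain y where y: "y \<in> Sk k" "y i = Mn k" unfolding vals_def by auto
      obtain x where x: "x \<in> Sk k" "x i = v" using v unfolding vals_def by auto
      have "x \<in> S" "y \<in> S" using x y unfolding Sk_def by auto
      then have "\<bar>int (x i) - int (y i)\<bar> \<le> int D" using spread by blast
      moreover have "Mn k \<le> v" unfolding Mn_def using finvals v by simp
      ultimately show "v \<in> {Mn k .. Mn k + D}" using x y by auto
    qed
    then have "card (vals k) \<le> card {Mn k .. Mn k + D}" by (intro card_mono) auto
    then have "card (vals k) \<le> D + 1" by simp
    moreover have "card (vals k) = card (Sk k)" unfolding vals_def using inj by (rule card_image)
    ultimately show ?thesis by simp
  qed
  have S_union: "S = (\<Union>k\<in>C. Sk k)" unfolding C_def Sk_def by auto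
  have a: "card S \<le> (D + 1) * card C"
  proof -
    have "card S = (\<Sum>k\<in>C. card (Sk k))"
      unfolding S_union using finC finSk by (subst card_UN_disjoint) (auto simp: Sk_def)
    also have "\<dots> \<le> (\<Sum>k\<in>C. D + 1)" using cardSk by (intro sum_mono) auto
    finally show ?thesis by (simp add: mult.commute)
  qed
  define ext where "ext k = k(i := (if Mx k + 1 < N then Mx k + 1 else Mn k - 1))" for k
  have ext_props: "ext k \<in> Dil d N i S \<and> ext k \<notin> S \<and> \<kappa> (ext k) = k" if k: "k \<in> C" for k
  proof -
    have Mxin: "Mx k \<in> vals k" unfolding Mx_def using finvals nevals[OF k] by (rule Max_in)
    have Mnin: "Mn k \<in> vals k" unfolding Mn_def using finvals nevals[OF k] by (rule Min_in)
    obtain xM where xM: "xM \<in> Sk k" "xM i = Mx k" using Mxin unfolding vals_def by auto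
    obtain xm where xm: "xm \<in> Sk k" "xm i = Mn k" using Mnin unfolding vals_def by auto
    have ki: "k i = 0" using k unfolding C_def \<kappa>_def by auto
    have kx: "\<kappa> xM = k" "\<kappa> xm = k" using xM xm unfolding Sk_def by auto
    have xMP: "xM \<in> boxP d N" "xm \<in> boxP d N" using xM xm SP unfolding Sk_def by auto
    have "xM \<in> S" "xm \<in> S" using xM xm unfolding Sk_def by auto
    then have spr: "\<bar>int (xM i) - int (xm i)\<bar> \<le> int D" using spread by blast
    have MxN: "Mx k < N" using boxP_coord[OF xMP(1) i] xM(2) by simp
    have kap: "\<kappa> (ext k) = k" unfolding ext_def \<kappa>_def using ki by (auto simp: fun_eq_iff)
    show ?thesis
    proof (cases "Mx k + 1 < N")
      case True
      have "k = xM(i := 0)" using kx(1) unfolding \<kappa>_def by simp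
      then have e: "ext k = xM(i := Mx k + 1)" unfolding ext_def using True by simp
      have "ext k \<in> boxP d N" unfolding e using xMP(1) True i by (intro boxP_upd) auto
      moreover have "\<exists>x\<in>S. \<bar>int (x i) - int (ext k i)\<bar> \<le> 1 \<and> (\<forall>j. j \<noteq> i \<longrightarrow> x j = ext k j)"
        using xM unfolding Sk_def e by (intro bexI[of _ xM]) auto
      moreover have "ext k \<notin> S"
      proof
        assume "ext k \<in> S"
        then have "ext k \<in> Sk k" using kap unfolding Sk_def by auto
        then have "ext k i \<in> vals k" unfolding vals_def by auto
        then have "ext k i \<le> Mx k" unfolding Mx_def using finvals by simp
        then show False unfolding e by simp
      qed
      ultimately show ?thesis using kap unfolding Dil_def by auto
    next
      case False
      then have MxN1: "Mx k = N - 1" using MxN by simp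
      have Mn1: "Mn k \<ge> 1" using spr xM xm MxN1 N by auto
      have "k = xm(i := 0)" using kx(2) unfolding \<kappa>_def by simp
      then have e: "ext k = xm(i := Mn k - 1)" unfolding ext_def using False by simp
      have "Mn k < N" using boxP_coord[OF xMP(2) i] xm(2) by simp
      then have "ext k \<in> boxP d N" unfolding e using xMP(2) i by (intro boxP_upd) auto
      moreover have "\<exists>x\<in>S. \<bar>int (x i) - int (ext k i)\<bar> \<le> 1 \<and> (\<forall>j. j \<noteq> i \<longrightarrow> x j = ext k j)"
        using xm Mn1 unfolding Sk_def e by (intro bexI[of _ xm]) auto
      moreover have "ext k \<notin> S"
      proof
        assume "ext k \<in> S"
        then have "ext k \<in> Sk k" using kap unfolding Sk_def by auto
        then have "ext k i \<in> vals k" unfolding vals_def by auto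
        then have "Mn k \<le> ext k i" unfolding Mn_def using finvals by simp
        then show False unfolding e using Mn1 by simp
      qed
      ultimately show ?thesis using kap unfolding Dil_def by auto
    qed
  qed
  have SD: "S \<subseteq> Dil d N i S"
  proof
    fix x assume "x \<in> S"
    then show "x \<in> Dil d N i S" using SP unfolding Dil_def by (intro CollectI conjI bexI[of _ x]) auto
  qed
  have injext: "inj_on ext C" using ext_props by (metis inj_on_inverseI)
  have b: "card S + card C \<le> card (Dil d N i S)"
  proof -
    have "card S + card C = card S + card (ext ` C)" using injext by (simp add: card_image)
    also have "\<dots> = card (S \<union> ext ` C)"
      using ext_props finS finC by (subst card_Un_disjoint) auto
    also have "\<dots> \<le> card (Dil d N i S)"
      using SD ext_props finite_boxP by (intro card_mono) (auto simp: Dil_def)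
    finally show ?thesis .
  qed
  have "(D + 2) * card S = (D + 1) * card S + card S" by simp
  also have "\<dots> \<le> (D + 1) * card S + (D + 1) * card C" using a by simp
  also have "\<dots> = (D + 1) * (card S + card C)" by (simp add: distrib_left)
  also have "\<dots> \<le> (D + 1) * card (Dil d N i S)" using b by (rule mult_le_mono2)
  finally show ?thesis .
qed

definition Tdil :: "nat \<Rightarrow> nat \<Rightarrow> nat \<Rightarrow> (nat \<Rightarrow> nat) set \<Rightarrow> (nat \<Rightarrow> nat) set" where
  "Tdil d N s J = {y \<in> boxP d N. \<exists>x\<in>J. (\<forall>i<s. \<bar>int (x i) - int (y i)\<bar> \<le> 1) \<and> (\<forall>i. s \<le> i \<longrightarrow> x i = y i)}"

definition KNb :: "nat \<Rightarrow> nat \<Rightarrow> (nat \<Rightarrow> nat) set \<Rightarrow> (nat \<Rightarrow> nat) set" where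
  "KNb d N J = {y \<in> boxP d N. \<exists>x\<in>J. \<forall>i<d. \<bar>int (x i) - int (y i)\<bar> \<le> 1}"

lemma Tdil_0: assumes "J \<subseteq> boxP d N" shows "Tdil d N 0 J = J"
proof
  show "Tdil d N 0 J \<subseteq> J"
  proof
    fix y assume "y \<in> Tdil d N 0 J"
    then obtain x where "x \<in> J" "\<forall>i. x i = y i" unfolding Tdil_def by auto
    then have "y = x" by (simp add: fun_eq_iff)
    then show "y \<in> J" using \<open>x \<in> J\<close> by simp
  qed
  show "J \<subseteq> Tdil d N 0 J"
  proof
    fix y assume "y \<in> J"
    then show "y \<in> Tdil d N 0 J" using assms unfolding Tdil_def by (intro CollectI conjI bexI[of _ y]) auto
  qed
qed

lemma Tdil_step: "Dil d N s (Tdil d N s J) \<subseteq> Tdil d N (Suc s) J"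
proof
  fix y assume "y \<in> Dil d N s (Tdil d N s J)"
  then obtain x' where y: "y \<in> boxP d N" and x': "x' \<in> Tdil d N s J" "\<bar>int (x' s) - int (y s)\<bar> \<le> 1" "\<forall>j. j \<noteq> s \<longrightarrow> x' j = y j"
    unfolding Dil_def by auto
  then obtain x where x: "x \<in> J" "\<forall>i<s. \<bar>int (x i) - int (x' i)\<bar> \<le> 1" "\<forall>i. s \<le> i \<longrightarrow> x i = x' i"
    unfolding Tdil_def by auto
  have "\<forall>i<Suc s. \<bar>int (x i) - int (y i)\<bar> \<le> 1"
  proof (intro allI impI)
    fix i assume "i < Suc s"
    then consider "i < s" | "i = s" by linarith
    then show "\<bar>int (x i) - int (y i)\<bar> \<le> 1"
    proof cases
      case 1 then show ?thesis using x(2) x'(3) by (metis less_irrefl)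
    next
      case 2 then show ?thesis using x(3) x'(2) by simp
    qed
  qed
  moreover have "\<forall>i. Suc s \<le> i \<longrightarrow> x i = y i" using x(3) x'(3) by simp
  ultimately show "y \<in> Tdil d N (Suc s) J" using y x(1) unfolding Tdil_def by blast
qed

lemma Tdil_spread:
  assumes "\<forall>x\<in>J. \<forall>y\<in>J. \<bar>int (x i) - int (y i)\<bar> \<le> int D" and "s \<le> i"
  shows "\<forall>x\<in>Tdil d N s J. \<forall>y\<in>Tdil d N s J. \<bar>int (x i) - int (y i)\<bar> \<le> int D"
proof (intro ballI)
  fix y1 y2 assume "y1 \<in> Tdil d N s J" "y2 \<in> Tdil d N s J"
  then obtain x1 x2 where "x1 \<in> J" "x1 i = y1 i" "x2 \<in> J" "x2 i = y2 i"
    unfolding Tdil_def using assms(2) by blast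
  then show "\<bar>int (y1 i) - int (y2 i)\<bar> \<le> int D" using assms(1) by metis
qed

lemma Tdil_sub: "Tdil d N s J \<subseteq> boxP d N" unfolding Tdil_def by auto

lemma Tdil_growth:
  assumes JP: "J \<subseteq> boxP d N" and N: "N \<ge> D + 2"
    and spread: "\<forall>i<d. \<forall>x\<in>J. \<forall>y\<in>J. \<bar>int (x i) - int (y i)\<bar> \<le> int D"
  shows "s \<le> d \<Longrightarrow> (D + 2) ^ s * card J \<le> (D + 1) ^ s * card (Tdil d N s J)"
proof (induction s)
  case 0 then show ?case using Tdil_0[OF JP] by simp
next
  case (Suc s)
  then have s: "s < d" by simp
  have sp: "\<forall>x\<in>Tdil d N s J. \<forall>y\<in>Tdil d N s J. \<bar>int (x s) - int (y s)\<bar> \<le> int D"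
    using spread s by (intro Tdil_spread) auto
  have "(D + 2) ^ Suc s * card J = (D + 2) * ((D + 2) ^ s * card J)" by (simp only: power_Suc mult.assoc)
  also have "\<dots> \<le> (D + 2) * ((D + 1) ^ s * card (Tdil d N s J))" using Suc s by (intro mult_le_mono2) simp
  also have "\<dots> = (D + 1) ^ s * ((D + 2) * card (Tdil d N s J))" by (metis mult.left_commute)
  also have "\<dots> \<le> (D + 1) ^ s * ((D + 1) * card (Dil d N s (Tdil d N s J)))"
    using dil_fiber[OF Tdil_sub s N sp] by (rule mult_le_mono2)
  also have "\<dots> \<le> (D + 1) ^ s * ((D + 1) * card (Tdil d N (Suc s) J))"
    using Tdil_step finite_subset[OF Tdil_sub finite_boxP] by (intro mult_le_mono2 card_mono) auto
  also have "\<dots> = (D + 1) ^ Suc s * card (Tdil d N (Suc s) J)" by (simp only: power_Suc mult.assoc mult.left_commute)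
  finally show ?case .
qed

lemma box_growth:
  assumes JP: "J \<subseteq> boxP d N" and N: "N \<ge> D + 2"
    and spread: "\<forall>i<d. \<forall>x\<in>J. \<forall>y\<in>J. \<bar>int (x i) - int (y i)\<bar> \<le> int D"
  shows "(D + 2) ^ d * card J \<le> (D + 1) ^ d * card (KNb d N J)"
proof -
  have "Tdil d N d J \<subseteq> KNb d N J" unfolding Tdil_def KNb_def by auto
  then have "card (Tdil d N d J) \<le> card (KNb d N J)"
    using finite_boxP by (intro card_mono) (auto simp: KNb_def intro: finite_subset)
  then show ?thesis using Tdil_growth[OF JP N spread le_refl]
    by (meson le_trans mult_le_mono2)
qed




datatype node = Bus nat nat | Vt nat nat

fun enc :: "node \<Rightarrow> nat" where
  "enc (Bus j x) = 2 * prod_encode (j, x)"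
| "enc (Vt m t) = Suc (2 * prod_encode (m, t))"

lemma inj_enc: "inj enc"
proof (rule injI)
  fix u v assume "enc u = enc v"
  then show "u = v"
    by (cases u; cases v) (auto dest: inj_onD[OF inj_prod_encode, of "(_, _)" "(_, _)", simplified] , presburger+)
qed

lemma open_seg_h:
  assumes "x1 < x2"
  shows "open_segment (Complex x1 y) (Complex x2 y) = {z. Im z = y \<and> x1 < Re z \<and> Re z < x2}"
  using assms
  by (auto simp: open_segment_def closed_segment_same_Im closed_segment_eq_real_ivl complex_eq_iff)

lemma open_seg_v:
  assumes "y1 < y2"
  shows "open_segment (Complex x y1) (Complex x y2) = {z. Re z = x \<and> y1 < Im z \<and> Im z < y2}"
  using assms
  by (auto simp: open_segment_def closed_segment_same_Re closed_segment_eq_real_ivl complex_eq_iff)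

locale sg =
  fixes n :: nat and adj :: "nat \<Rightarrow> nat \<Rightarrow> bool" and ell :: nat
  assumes ell_prime: "prime ell" and ell_big: "4 * n * n + 2 < ell"
begin

definition hedge :: "nat \<Rightarrow> bool" where
  "hedge m \<longleftrightarrow> m < n * n \<and> m div n < m mod n \<and> adj (m div n) (m mod n)"

definition present :: "nat \<Rightarrow> nat \<Rightarrow> bool" where
  "present j m \<longleftrightarrow> hedge m \<and> (j = m div n \<or> j = m mod n)"

definition PP :: "nat \<Rightarrow> nat \<Rightarrow> node" where
  "PP m t = (if t = 0 then Bus (m div n) (2*m+1) else if t = ell then Bus (m mod n) (2*m+1) else Vt m t)"

definition VN :: "node set" where
  "VN = {Bus j (2*q) | j q. j < n \<and> q \<le> n*n} \<union> {Bus j (2*m+1) | j m. j < n \<and> present j m}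
      \<union> {Vt m t | m t. hedge m \<and> 0 < t \<and> t < ell}"

definition HX :: "nat \<Rightarrow> nat \<Rightarrow> nat \<Rightarrow> bool" where
  "HX j x1 x2 \<longleftrightarrow> (\<exists>q<n*n. (x1 = 2*q \<and> x2 = 2*q+1 \<and> present j q) \<or> (x1 = 2*q+1 \<and> x2 = 2*q+2 \<and> present j q)
                     \<or> (x1 = 2*q \<and> x2 = 2*q+2 \<and> \<not> present j q))"

definition EN :: "(node \<times> node) set" where
  "EN = {(Bus j x1, Bus j x2) | j x1 x2. j < n \<and> HX j x1 x2} \<union> {(PP m t, PP m (Suc t)) | m t. hedge m \<and> t < ell}"

definition Y :: "nat \<Rightarrow> nat \<Rightarrow> nat" where
  "Y m t = ell * (m div n) + t * (m mod n - m div n)"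

fun posN :: "node \<Rightarrow> complex" where
  "posN (Bus j x) = Complex (real x) (real (ell * j))"
| "posN (Vt m t) = Complex (real (2*m+1)) (real (Y m t))"

definition Hset :: "nat \<Rightarrow> nat \<Rightarrow> nat \<Rightarrow> complex set" where
  "Hset j x1 x2 = {z. Im z = real (ell * j) \<and> real x1 < Re z \<and> Re z < real x2}"

definition Vset :: "nat \<Rightarrow> nat \<Rightarrow> complex set" where
  "Vset m t = {z. Re z = real (2*m+1) \<and> real (Y m t) < Im z \<and> Im z < real (Y m (Suc t))}"

definition SEG :: "node \<times> node \<Rightarrow> complex set" where
  "SEG p = open_segment (posN (fst p)) (posN (snd p))"

lemma ell_pos: "ell > 0" using ell_big by simp

lemma n_less: "n < ell"
proof -
  have "n \<le> n * n" by (rule le_square)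
  also have "\<dots> \<le> 4 * n * n" by simp
  finally show ?thesis using ell_big by linarith
qed

lemma hedge_facts:
  assumes "hedge m"
  shows "m div n < n" "m mod n < n" "m div n < m mod n" "m mod n - m div n < ell" "0 < m mod n - m div n"
        "m = (m div n) * n + m mod n"
proof -
  have mn: "m < n * n" "m div n < m mod n" using assms unfolding hedge_def by auto
  then have npos: "n > 0" by (cases n) auto
  show "m div n < n" using mn(1) npos by (simp add: less_mult_imp_div_less)
  show "m mod n < n" using npos by simp
  show "m div n < m mod n" by (rule mn(2))
  show "m mod n - m div n < ell" using \<open>m mod n < n\<close> n_less by linarith
  show "0 < m mod n - m div n" using mn(2) by simp
  show "m = (m div n) * n + m mod n" by simp
qed

lemma not_dvd:
  assumes "hedge m" "0 < t" "t < ell"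
  shows "\<not> ell dvd t * (m mod n - m div n)"
proof
  assume "ell dvd t * (m mod n - m div n)"
  then have "ell dvd t \<or> ell dvd (m mod n - m div n)" using ell_prime by (simp add: prime_dvd_mult_iff)
  then show False using hedge_facts[OF assms(1)] assms(2,3) by (auto dest: dvd_imp_le)
qed

lemma Y_0: "Y m 0 = ell * (m div n)" unfolding Y_def by simp

lemma Y_ell: "hedge m \<Longrightarrow> Y m ell = ell * (m mod n)"
  using hedge_facts(3)[of m] unfolding Y_def by (simp add: diff_mult_distrib2)

lemma Y_Suc: "Y m (Suc t) = Y m t + (m mod n - m div n)" unfolding Y_def by simp

lemma Y_mono: "hedge m \<Longrightarrow> t < t' \<Longrightarrow> Y m t < Y m t'"
  using hedge_facts(5)[of m] unfolding Y_def by simp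

lemma Y_not_row:
  assumes "hedge m" "0 < t" "t < ell" shows "Y m t \<noteq> ell * j"
proof
  assume "Y m t = ell * j"
  then have "ell dvd ell * (m div n) + t * (m mod n - m div n)" unfolding Y_def by simp
  then have "ell dvd t * (m mod n - m div n)" by (simp add: dvd_add_right_iff)
  then show False using not_dvd[OF assms] by simp
qed

lemma posN_PP: "hedge m \<Longrightarrow> t \<le> ell \<Longrightarrow> posN (PP m t) = Complex (real (2*m+1)) (real (Y m t))"
  unfolding PP_def using Y_0 Y_ell by auto

lemma PP_in_VN: assumes "hedge m" "t \<le> ell" shows "PP m t \<in> VN"
proof -
  have p: "present (m div n) m" "present (m mod n) m" using assms(1) unfolding present_def by auto
  show ?thesis using assms hedge_facts[OF assms(1)] p unfolding PP_def VN_def by auto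
qed

lemma HX_cases:
  assumes "HX j x1 x2" obtains q where "q < n*n" "x1 = 2*q" "x2 = 2*q+1" "present j q"
  | q where "q < n*n" "x1 = 2*q+1" "x2 = 2*q+2" "present j q"
  | q where "q < n*n" "x1 = 2*q" "x2 = 2*q+2" "\<not> present j q"
  using assms unfolding HX_def by blast

lemma HX_lt: "HX j x1 x2 \<Longrightarrow> x1 < x2"
  by (erule HX_cases) auto

lemma EN_cases:
  assumes "p \<in> EN"
  obtains j x1 x2 where "p = (Bus j x1, Bus j x2)" "j < n" "HX j x1 x2" "SEG p = Hset j x1 x2"
  | m t where "p = (PP m t, PP m (Suc t))" "hedge m" "t < ell" "SEG p = Vset m t"
proof -
  consider (h) j x1 x2 where "p = (Bus j x1, Bus j x2)" "j < n" "HX j x1 x2"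
    | (v) m t where "p = (PP m t, PP m (Suc t))" "hedge m" "t < ell"
    using assms unfolding EN_def by blast
  then show ?thesis
  proof cases
    case h
    have "SEG p = Hset j x1 x2" unfolding SEG_def Hset_def h(1)
      using HX_lt[OF h(3)] by (simp add: open_seg_h)
    then show ?thesis using h that(1) by blast
  next
    case v
    have "SEG p = Vset m t" unfolding SEG_def Vset_def v(1)
      using posN_PP[OF v(2)] v(3) Y_mono[OF v(2), of t "Suc t"] by (simp add: open_seg_v)
    then show ?thesis using v that(2) by blast
  qed
qed


lemma HH:
  assumes "HX j x1 x2" "HX j' x1' x2'" "z \<in> Hset j x1 x2" "z \<in> Hset j' x1' x2'"
  shows "j = j' \<and> x1 = x1' \<and> x2 = x2'"
proof -
  have "real (ell * j) = real (ell * j')" using assms(3,4) unfolding Hset_def by auto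
  then have jj: "j = j'" using ell_pos by simp
  have "real x1 < real x2'" "real x1' < real x2" using assms(3,4) unfolding Hset_def by auto
  then have lt: "x1 < x2'" "x1' < x2" by simp_all
  have bnd: "\<exists>q. 2*q \<le> x1 \<and> x2 \<le> 2*q+2 \<and> (present j q \<longrightarrow> (x1 = 2*q \<and> x2 = 2*q+1) \<or> (x1 = 2*q+1 \<and> x2 = 2*q+2))
      \<and> (\<not> present j q \<longrightarrow> x1 = 2*q \<and> x2 = 2*q+2)" if "HX j x1 x2" for j x1 x2
    using that
  proof (cases rule: HX_cases)
    case (1 q) then show ?thesis by (intro exI[of _ q]) auto
  next
    case (2 q) then show ?thesis by (intro exI[of _ q]) auto
  next
    case (3 q) then show ?thesis by (intro exI[of _ q]) auto
  qed
  obtain q where q: "2*q \<le> x1" "x2 \<le> 2*q+2" "present j q \<longrightarrow> (x1 = 2*q \<and> x2 = 2*q+1) \<or> (x1 = 2*q+1 \<and> x2 = 2*q+2)"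
      "\<not> present j q \<longrightarrow> x1 = 2*q \<and> x2 = 2*q+2" using bnd[OF assms(1)] by blast
  obtain q' where q': "2*q' \<le> x1'" "x2' \<le> 2*q'+2" "present j q' \<longrightarrow> (x1' = 2*q' \<and> x2' = 2*q'+1) \<or> (x1' = 2*q'+1 \<and> x2' = 2*q'+2)"
      "\<not> present j q' \<longrightarrow> x1' = 2*q' \<and> x2' = 2*q'+2" using bnd[OF assms(2)] jj by blast
  have qq: "q = q'" using q(1,2) q'(1,2) lt by linarith
  have "x1 = x1' \<and> x2 = x2'"
  proof (cases "present j q")
    case True
    then show ?thesis using q(3) q'(3) qq lt by auto
  next
    case False
    then show ?thesis using q(4) q'(4) qq by auto
  qed
  then show ?thesis using jj by simp
qed

lemma VV:
  assumes "hedge m" "hedge m'" "z \<in> Vset m t" "z \<in> Vset m' t'"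
  shows "m = m' \<and> t = t'"
proof -
  have "real (2*m+1) = real (2*m'+1)" using assms(3,4) unfolding Vset_def by auto
  then have mm: "m = m'" by simp
  have "real (Y m t) < real (Y m (Suc t'))" "real (Y m t') < real (Y m (Suc t))"
    using assms(3,4) mm unfolding Vset_def by auto
  then have "Y m t < Y m (Suc t')" "Y m t' < Y m (Suc t)" by simp_all
  then have "t < Suc t'" "t' < Suc t" using Y_mono[OF assms(1)] by (metis not_less_iff_gr_or_eq)+
  then show ?thesis using mm by simp
qed

lemma HV:
  assumes "HX j x1 x2" "hedge m" "z \<in> Hset j x1 x2" "z \<in> Vset m t"
  shows "z = Complex (real (2*m+1)) (real (ell*j)) \<and> x1 = 2*m \<and> x2 = 2*m+2 \<and> Y m t < ell*j \<and> ell*j < Y m (Suc t)"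
proof -
  have z: "Re z = real (2*m+1)" "Im z = real (ell*j)" using assms(3,4) unfolding Hset_def Vset_def by auto
  have "real x1 < real (2*m+1)" "real (2*m+1) < real x2" using assms(3) z unfolding Hset_def by auto
  then have lt: "x1 < 2*m+1" "2*m+1 < x2" by linarith+
  have "real (Y m t) < real (ell*j)" "real (ell*j) < real (Y m (Suc t))" using assms(4) z unfolding Vset_def by auto
  then have "Y m t < ell*j" "ell*j < Y m (Suc t)" by linarith+
  moreover have "x1 = 2*m \<and> x2 = 2*m+2"
    using assms(1) by (cases rule: HX_cases) (use lt in auto)
  moreover have "z = Complex (real (2*m+1)) (real (ell*j))" using z by (simp add: complex_eq_iff)
  ultimately show ?thesis by simp
qed

lemma row_unique:
  assumes "hedge m" "Y m t < ell*j" "ell*j < Y m (Suc t)" "Y m t < ell*j'" "ell*j' < Y m (Suc t)"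
  shows "j = j'"
proof (rule ccontr)
  assume "j \<noteq> j'"
  then have "ell * j + ell \<le> ell * j' \<or> ell * j' + ell \<le> ell * j"
    by (metis less_imp_Suc_add mult_Suc_right nat_neq_iff add.commute add_Suc_right le_add1 mult_le_mono2 Suc_leI le_refl nat_le_linear)
  moreover have "Y m (Suc t) = Y m t + (m mod n - m div n)" by (rule Y_Suc)
  moreover have "m mod n - m div n < ell" using hedge_facts(4)[OF assms(1)] .
  ultimately show False using assms by linarith
qed

lemma t_unique:
  assumes "hedge m" "Y m t < ell*j" "ell*j < Y m (Suc t)" "Y m t' < ell*j" "ell*j < Y m (Suc t')"
  shows "t = t'"
proof -
  have "Y m t < Y m (Suc t')" "Y m t' < Y m (Suc t)" using assms by linarith+
  then have "t < Suc t'" "t' < Suc t" using Y_mono[OF assms(1)] by (metis not_less_iff_gr_or_eq)+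
  then show ?thesis by simp
qed

lemma cross_unique:
  assumes p: "p \<in> EN" and p1: "p1 \<in> EN" and p2: "p2 \<in> EN" and ne1: "p1 \<noteq> p" and ne2: "p2 \<noteq> p"
    and z1: "z1 \<in> SEG p" "z1 \<in> SEG p1" and z2: "z2 \<in> SEG p" "z2 \<in> SEG p2"
  shows "p1 = p2 \<and> z1 = z2"
  using p
proof (cases rule: EN_cases)
  case (1 j x1 x2)
  note P = 1
  obtain m1 t1 where Q1: "p1 = (PP m1 t1, PP m1 (Suc t1))" "hedge m1" "t1 < ell" "SEG p1 = Vset m1 t1"
  proof (cases rule: EN_cases[OF p1])
    case (1 j' x1' x2')
    then have "j = j' \<and> x1 = x1' \<and> x2 = x2'" using HH[OF P(3) 1(3)] z1 P(4) by auto
    then have "p1 = p" using 1 P by simp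
    then show ?thesis using ne1 by simp
  qed
  obtain m2 t2 where Q2: "p2 = (PP m2 t2, PP m2 (Suc t2))" "hedge m2" "t2 < ell" "SEG p2 = Vset m2 t2"
  proof (cases rule: EN_cases[OF p2])
    case (1 j' x1' x2')
    then have "j = j' \<and> x1 = x1' \<and> x2 = x2'" using HH[OF P(3) 1(3)] z2 P(4) by auto
    then have "p2 = p" using 1 P by simp
    then show ?thesis using ne2 by simp
  qed
  have A: "z1 = Complex (real (2*m1+1)) (real (ell*j)) \<and> x1 = 2*m1 \<and> x2 = 2*m1+2 \<and> Y m1 t1 < ell*j \<and> ell*j < Y m1 (Suc t1)"
    using HV[OF P(3) Q1(2), of z1 t1] z1 P(4) Q1(4) by (simp only:)
  have B: "z2 = Complex (real (2*m2+1)) (real (ell*j)) \<and> x1 = 2*m2 \<and> x2 = 2*m2+2 \<and> Y m2 t2 < ell*j \<and> ell*j < Y m2 (Suc t2)"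
    using HV[OF P(3) Q2(2), of z2 t2] z2 P(4) Q2(4) by (simp only:)
  have mm: "m1 = m2" using A B by simp
  have "t1 = t2" using t_unique[OF Q1(2), of t1 j t2] A B mm by simp
  then show ?thesis using A B mm Q1 Q2 by simp
next
  case (2 m t)
  note P = 2
  obtain j1 a1 b1 where Q1: "p1 = (Bus j1 a1, Bus j1 b1)" "j1 < n" "HX j1 a1 b1" "SEG p1 = Hset j1 a1 b1"
  proof (cases rule: EN_cases[OF p1])
    case (2 m' t')
    then have "m = m' \<and> t = t'" using VV[OF P(2) 2(2)] z1 P(4) by auto
    then have "p1 = p" using 2 P by simp
    then show ?thesis using ne1 by simp
  qed
  obtain j2 a2 b2 where Q2: "p2 = (Bus j2 a2, Bus j2 b2)" "j2 < n" "HX j2 a2 b2" "SEG p2 = Hset j2 a2 b2"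
  proof (cases rule: EN_cases[OF p2])
    case (2 m' t')
    then have "m = m' \<and> t = t'" using VV[OF P(2) 2(2)] z2 P(4) by auto
    then have "p2 = p" using 2 P by simp
    then show ?thesis using ne2 by simp
  qed
  have A: "z1 = Complex (real (2*m+1)) (real (ell*j1)) \<and> a1 = 2*m \<and> b1 = 2*m+2 \<and> Y m t < ell*j1 \<and> ell*j1 < Y m (Suc t)"
    using HV[OF Q1(3) P(2), of z1 t] z1 P(4) Q1(4) by (simp only:)
  have B: "z2 = Complex (real (2*m+1)) (real (ell*j2)) \<and> a2 = 2*m \<and> b2 = 2*m+2 \<and> Y m t < ell*j2 \<and> ell*j2 < Y m (Suc t)"
    using HV[OF Q2(3) P(2), of z2 t] z2 P(4) Q2(4) by (simp only:)
  have "j1 = j2" using row_unique[OF P(2), of t j1 j2] A B by simp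
  then show ?thesis using A B Q1 Q2 by simp
qed


lemma Y_mono_le: "t \<le> t' \<Longrightarrow> Y m t \<le> Y m t'"
  unfolding Y_def by simp

lemma VN_cases:
  assumes "w \<in> VN"
  obtains j q where "w = Bus j (2*q)" "j < n" "q \<le> n*n"
  | j m where "w = Bus j (2*m+1)" "j < n" "present j m"
  | m t where "w = Vt m t" "hedge m" "0 < t" "t < ell"
  using assms unfolding VN_def by blast

lemma avoid:
  assumes p: "p \<in> EN" and w: "w \<in> VN"
  shows "posN w \<notin> SEG p"
  using p
proof (cases rule: EN_cases)
  case (1 j x1 x2)
  show ?thesis
  proof
    assume "posN w \<in> SEG p"
    then have inH: "posN w \<in> Hset j x1 x2" using 1 by simp
    from w show False
    proof (cases rule: VN_cases)
      case (1 j' q)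
      then have "real (ell*j') = real (ell*j)" "real x1 < real (2*q)" "real (2*q) < real x2"
        using inH unfolding Hset_def by auto
      then have lt: "x1 < 2*q" "2*q < x2" by linarith+
      from \<open>HX j x1 x2\<close> show False by (cases rule: HX_cases) (use lt in auto)
    next
      case (2 j' m)
      then have "real (ell*j') = real (ell*j)" "real x1 < real (2*m+1)" "real (2*m+1) < real x2"
        using inH unfolding Hset_def by auto
      then have jj: "j' = j" and lt: "x1 < 2*m+1" "2*m+1 < x2" using ell_pos by simp_all
      from \<open>HX j x1 x2\<close> show False
      proof (cases rule: HX_cases)
        case (3 q)
        then have "q = m" using lt by linarith
        then show False using 3 2 jj by simp
      qed (use lt in auto)
    next
      case (3 m t)
      then have "real (Y m t) = real (ell*j)" using inH unfolding Hset_def by auto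
      then have "Y m t = ell * j" by linarith
      then show False using Y_not_row[OF 3(2-4)] by simp
    qed
  qed
next
  case (2 m t)
  show ?thesis
  proof
    assume "posN w \<in> SEG p"
    then have inV: "posN w \<in> Vset m t" using 2 by simp
    from w show False
    proof (cases rule: VN_cases)
      case (1 j' q)
      then have "real (2*q) = real (2*m+1)" using inV unfolding Vset_def by auto
      then have "2*q = 2*m+1" by linarith
      then show False by presburger
    next
      case (3 m' t')
      then have "real (2*m'+1) = real (2*m+1)" "real (Y m' t') > real (Y m t)" "real (Y m' t') < real (Y m (Suc t))"
        using inV unfolding Vset_def by auto
      then have "m' = m" "Y m t' > Y m t" "Y m t' < Y m (Suc t)" by simp_all
      then have "t < t'" "t' < Suc t" using Y_mono[OF 2(2)] by (metis not_less_iff_gr_or_eq)+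
      then show False by simp
    next
      case (2 j' m')
      then have r: "real (2*m'+1) = real (2*m+1)" "real (ell*j') > real (Y m t)" "real (ell*j') < real (Y m (Suc t))"
        using inV unfolding Vset_def by auto
      have mm: "m' = m" using r(1) by simp
      have lt: "ell*j' > Y m t" using r(2) by (simp only: of_nat_less_iff)
      have lt2: "ell*j' < Y m (Suc t)" using r(3) by (simp only: of_nat_less_iff)
      have "Y m 0 \<le> Y m t" "Y m (Suc t) \<le> Y m ell" using \<open>t < ell\<close> by (simp_all add: Y_mono_le)
      then have "ell * (m div n) < ell * j'" "ell * j' < ell * (m mod n)"
        using lt lt2 Y_0[of m] Y_ell[OF \<open>hedge m\<close>] by linarith+
      then have "m div n < j'" "j' < m mod n" by simp_all
      then show False using 2(3) mm unfolding present_def by auto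
    qed
  qed
qed

lemma posN_inj: "inj_on posN VN"
proof (rule inj_onI)
  fix u v assume u: "u \<in> VN" and v: "v \<in> VN" and eq: "posN u = posN v"
  show "u = v"
  proof (cases u)
    case (Bus j x)
    show ?thesis
    proof (cases v)
      case (Bus j' x')
      then show ?thesis using eq \<open>u = Bus j x\<close> ell_pos by (auto simp: complex_eq_iff)
    next
      case (Vt m t)
      then have "real (ell*j) = real (Y m t)" using eq \<open>u = Bus j x\<close> by (auto simp: complex_eq_iff)
      moreover have "hedge m" "0 < t" "t < ell" using v Vt by (auto elim: VN_cases)
      ultimately show ?thesis using Y_not_row by (metis of_nat_eq_iff)
    qed
  next
    case (Vt m t)
    show ?thesis
    proof (cases v)
      case (Bus j x)
      then have "real (ell*j) = real (Y m t)" using eq \<open>u = Vt m t\<close> by (auto simp: complex_eq_iff)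
      moreover have "hedge m" "0 < t" "t < ell" using u Vt by (auto elim: VN_cases)
      ultimately show ?thesis using Y_not_row by (metis of_nat_eq_iff)
    next
      case (Vt m' t')
      then have mm: "m = m'" and "Y m t = Y m t'" using eq \<open>u = Vt m t\<close> by (auto simp: complex_eq_iff)
      moreover have "hedge m" using u \<open>u = Vt m t\<close> by (auto elim: VN_cases)
      ultimately have "t = t'" using Y_mono by (metis not_less_iff_gr_or_eq less_irrefl)
      then show ?thesis using mm \<open>u = Vt m t\<close> Vt by simp
    qed
  qed
qed

lemma EN_in_VN: assumes "p \<in> EN" shows "fst p \<in> VN" "snd p \<in> VN" "posN (fst p) \<noteq> posN (snd p)"
proof -
  have "fst p \<in> VN \<and> snd p \<in> VN \<and> posN (fst p) \<noteq> posN (snd p)"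
    using assms
  proof (cases rule: EN_cases)
    case (1 j x1 x2)
    from 1(3) have "Bus j x1 \<in> VN \<and> Bus j x2 \<in> VN"
    proof (cases rule: HX_cases)
      case (1 q) then show ?thesis using \<open>j < n\<close> unfolding VN_def by auto
    next
      case (2 q)
      then have "Bus j x2 = Bus j (2*(Suc q))" "Suc q \<le> n*n" by auto
      then show ?thesis using 2 \<open>j < n\<close> unfolding VN_def by blast
    next
      case (3 q)
      then have a: "Bus j x2 = Bus j (2*(Suc q))" "Suc q \<le> n*n" "Bus j x1 = Bus j (2*q)" "q \<le> n*n" by auto
      have "Bus j x1 \<in> VN" unfolding VN_def using a(3,4) \<open>j < n\<close> by blast
      moreover have "Bus j x2 \<in> VN" unfolding VN_def using a(1,2) \<open>j < n\<close> by blast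
      ultimately show ?thesis by blast
    qed
    then show ?thesis using 1 HX_lt[OF 1(3)] by (auto simp: complex_eq_iff)
  next
    case (2 m t)
    then show ?thesis using PP_in_VN[of m t] PP_in_VN[of m "Suc t"] posN_PP[of m t] posN_PP[of m "Suc t"]
      Y_mono[of m t "Suc t"] by (auto simp: complex_eq_iff)
  qed
  then show "fst p \<in> VN" "snd p \<in> VN" "posN (fst p) \<noteq> posN (snd p)" by auto
qed

lemma finite_VN: "finite VN"
proof -
  have "VN \<subseteq> (\<lambda>(j,x). Bus j x) ` ({..<n} \<times> {..2*n*n+1}) \<union> (\<lambda>(m,t). Vt m t) ` ({..<n*n} \<times> {..<ell})"
  proof
    fix w assume "w \<in> VN"
    then show "w \<in> (\<lambda>(j,x). Bus j x) ` ({..<n} \<times> {..2*n*n+1}) \<union> (\<lambda>(m,t). Vt m t) ` ({..<n*n} \<times> {..<ell})"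
    proof (cases rule: VN_cases)
      case (1 j q) then show ?thesis by (auto intro!: image_eqI[of _ _ "(j, 2*q)"])
    next
      case (2 j m)
      then have "m < n*n" unfolding present_def hedge_def by auto
      then show ?thesis using 2 by (auto intro!: image_eqI[of _ _ "(j, 2*m+1)"])
    next
      case (3 m t)
      then have "m < n*n" unfolding hedge_def by auto
      then show ?thesis using 3 by (auto intro!: image_eqI[of _ _ "(m, t)"])
    qed
  qed
  then show ?thesis by (rule finite_subset) auto
qed

lemma finite_EN: "finite EN"
proof -
  have "EN \<subseteq> VN \<times> VN" using EN_in_VN by (auto simp: mem_Times_iff)
  then show ?thesis using finite_VN by (auto intro: finite_subset)
qed

end




lemma subsingleton_card: assumes "\<forall>a\<in>S. \<forall>b\<in>S. a = b" shows "finite S \<and> card S \<le> 1"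
proof (cases "S = {}")
  case False
  then obtain a where "a \<in> S" by auto
  then have "S = {a}" using assms by auto
  then show ?thesis by simp
qed simp

context sg
begin

definition Vg :: "nat set" where "Vg = enc ` VN"
definition Eg :: "nat set set" where "Eg = (\<lambda>p. {enc (fst p), enc (snd p)}) ` EN"
definition pos :: "nat \<Rightarrow> complex" where "pos v = posN (inv enc v)"
definition curve :: "nat set \<Rightarrow> real \<Rightarrow> complex" where "curve e = linepath (pos (Min e)) (pos (Max e))"

lemma pos_enc[simp]: "pos (enc w) = posN w"
  unfolding pos_def using inj_enc by simp

lemma curve_props:
  assumes p: "p \<in> EN"
  shows "{pathstart (curve {enc (fst p), enc (snd p)}), pathfinish (curve {enc (fst p), enc (snd p)})}
            = pos ` {enc (fst p), enc (snd p)}"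
    and "edge_interior (curve {enc (fst p), enc (snd p)}) = SEG p"
    and "arc (curve {enc (fst p), enc (snd p)})"
proof -
  let ?a = "enc (fst p)" and ?b = "enc (snd p)"
  have ne: "posN (fst p) \<noteq> posN (snd p)" using EN_in_VN[OF p] by simp
  then have ab: "?a \<noteq> ?b" using inj_enc by (metis injD)
  have mm: "(Min {?a, ?b} = ?a \<and> Max {?a, ?b} = ?b) \<or> (Min {?a, ?b} = ?b \<and> Max {?a, ?b} = ?a)"
    by (cases "?a \<le> ?b") (auto simp: min_def max_def)
  show "{pathstart (curve {?a, ?b}), pathfinish (curve {?a, ?b})} = pos ` {?a, ?b}"
    using mm unfolding curve_def by auto
  show "edge_interior (curve {?a, ?b}) = SEG p"
    using mm unfolding curve_def edge_interior_def SEG_def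
    by (auto simp: open_segment_def closed_segment_commute)
  show "arc (curve {?a, ?b})"
    using mm ne unfolding curve_def by auto
qed

lemma Eg_cases:
  assumes "e \<in> Eg" obtains p where "p \<in> EN" "e = {enc (fst p), enc (snd p)}"
  using assms unfolding Eg_def by auto

lemma drawing: "one_planar_drawing Vg Eg pos curve"
  unfolding one_planar_drawing_def
proof (intro conjI ballI)
  show "inj_on pos Vg" unfolding Vg_def using posN_inj inj_enc
    by (auto simp: inj_on_def)
next
  fix e assume "e \<in> Eg"
  then obtain p where p: "p \<in> EN" "e = {enc (fst p), enc (snd p)}" by (rule Eg_cases)
  show "arc (curve e)" using curve_props(3)[OF p(1)] p(2) by simp
  show "{pathstart (curve e), pathfinish (curve e)} = pos ` e" using curve_props(1)[OF p(1)] p(2) by simp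
  show "edge_interior (curve e) \<inter> pos ` Vg = {}"
    using curve_props(2)[OF p(1)] p(2) avoid[OF p(1)] unfolding Vg_def by auto
next
  fix e assume "e \<in> Eg"
  then obtain p where p: "p \<in> EN" "e = {enc (fst p), enc (snd p)}" by (rule Eg_cases)
  let ?S = "{(f, z). f \<in> Eg \<and> f \<noteq> e \<and> z \<in> edge_interior (curve e) \<inter> edge_interior (curve f)}"
  have "\<forall>a\<in>?S. \<forall>b\<in>?S. a = b"
  proof (intro ballI)
    fix a b assume a: "a \<in> ?S" and b: "b \<in> ?S"
    obtain f1 z1 where A: "a = (f1, z1)" "f1 \<in> Eg" "f1 \<noteq> e" "z1 \<in> edge_interior (curve e)" "z1 \<in> edge_interior (curve f1)"
      using a by auto
    obtain f2 z2 where B: "b = (f2, z2)" "f2 \<in> Eg" "f2 \<noteq> e" "z2 \<in> edge_interior (curve e)" "z2 \<in> edge_interior (curve f2)"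
      using b by auto
    obtain p1 where p1: "p1 \<in> EN" "f1 = {enc (fst p1), enc (snd p1)}" using A(2) by (rule Eg_cases)
    obtain p2 where p2: "p2 \<in> EN" "f2 = {enc (fst p2), enc (snd p2)}" using B(2) by (rule Eg_cases)
    have "p1 \<noteq> p" using A(3) p1(2) p(2) by auto
    moreover have "p2 \<noteq> p" using B(3) p2(2) p(2) by auto
    moreover have "z1 \<in> SEG p" "z2 \<in> SEG p" using A(4) B(4) curve_props(2)[OF p(1)] p(2) by auto
    moreover have "z1 \<in> SEG p1" using A(5) curve_props(2)[OF p1(1)] p1(2) by auto
    moreover have "z2 \<in> SEG p2" using B(5) curve_props(2)[OF p2(1)] p2(2) by auto
    ultimately have "p1 = p2 \<and> z1 = z2" using cross_unique[OF p(1) p1(1) p2(1)] by blast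
    then show "a = b" using A(1) B(1) p1(2) p2(2) by simp
  qed
  then show "finite ?S" "card ?S \<le> 1" using subsingleton_card by blast+
qed

lemma graph: "finite_graph Vg Eg"
  unfolding finite_graph_def
proof (intro conjI ballI)
  show "finite Vg" unfolding Vg_def using finite_VN by simp
next
  fix e assume "e \<in> Eg"
  then obtain p where p: "p \<in> EN" "e = {enc (fst p), enc (snd p)}" by (rule Eg_cases)
  have "enc (fst p) \<noteq> enc (snd p)" using EN_in_VN(3)[OF p(1)] inj_enc by (metis injD)
  moreover have "enc (fst p) \<in> Vg" "enc (snd p) \<in> Vg" using EN_in_VN[OF p(1)] unfolding Vg_def by auto
  ultimately show "\<exists>u v. e = {u, v} \<and> u \<noteq> v \<and> u \<in> Vg \<and> v \<in> Vg" using p(2) by blast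
qed

end




declare enc.simps[simp del]

context sg
begin

definition phiN :: "(nat \<Rightarrow> real) \<Rightarrow> node \<Rightarrow> real" where
  "phiN f w = (case w of Bus j x \<Rightarrow> f j
     | Vt m t \<Rightarrow> f (m div n) + real t * (f (m mod n) - f (m div n)) / real ell)"

lemma phiN_PP: "hedge m \<Longrightarrow> t \<le> ell \<Longrightarrow> phiN f (PP m t) = f (m div n) + real t * (f (m mod n) - f (m div n)) / real ell"
  using ell_pos unfolding PP_def phiN_def by auto

lemma phi_edge:
  assumes lip: "\<And>m. hedge m \<Longrightarrow> \<bar>f (m div n) - f (m mod n)\<bar> \<le> 1" and e: "{x, y} \<in> Eg"
  shows "\<bar>phiN f (inv enc x) - phiN f (inv enc y)\<bar> \<le> 1 / real ell"
proof -
  obtain p where p: "p \<in> EN" "{x, y} = {enc (fst p), enc (snd p)}" using e by (rule Eg_cases)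
  have key: "\<bar>phiN f (fst p) - phiN f (snd p)\<bar> \<le> 1 / real ell"
    using p(1)
  proof (cases rule: EN_cases)
    case (1 j x1 x2)
    then show ?thesis using ell_pos by (simp add: phiN_def)
  next
    case (2 m t)
    have "phiN f (fst p) - phiN f (snd p) = - (f (m mod n) - f (m div n)) / real ell"
      using 2 phiN_PP[of m t f] phiN_PP[of m "Suc t" f] by (simp add: field_simps)
    then have "\<bar>phiN f (fst p) - phiN f (snd p)\<bar> = \<bar>f (m div n) - f (m mod n)\<bar> / real ell"
      by (simp add: abs_minus_commute)
    also have "\<dots> \<le> 1 / real ell" using lip[OF 2(2)] ell_pos by (simp add: divide_right_mono)
    finally show ?thesis .
  qed
  have "(x = enc (fst p) \<and> y = enc (snd p)) \<or> (x = enc (snd p) \<and> y = enc (fst p))"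
    using p(2) by (metis doubleton_eq_iff)
  then show ?thesis using key inj_enc by (auto simp: abs_minus_commute)
qed

lemma gd_lower:
  assumes lip: "\<And>m. hedge m \<Longrightarrow> \<bar>f (m div n) - f (m mod n)\<bar> \<le> 1"
  shows "ereal (real ell * \<bar>f j - f j'\<bar>) \<le> gd Eg (enc (Bus j 0)) (enc (Bus j' 0))"
proof (rule gd_ge)
  fix s assume w: "walk Eg (enc (Bus j 0)) (enc (Bus j' 0)) s"
  have "\<bar>phiN f (inv enc (enc (Bus j 0))) - phiN f (inv enc (enc (Bus j' 0)))\<bar> \<le> real s * (1 / real ell)"
    using walk_lipschitz[OF w, of "\<lambda>v. phiN f (inv enc v)"] phi_edge[OF lip] by blast
  then have "\<bar>f j - f j'\<bar> \<le> real s / real ell" using inj_enc by (simp add: phiN_def)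
  then show "real ell * \<bar>f j - f j'\<bar> \<le> real s" using ell_pos by (simp add: field_simps)
qed

lemma EN_edge: "p \<in> EN \<Longrightarrow> {enc (fst p), enc (snd p)} \<in> Eg"
  unfolding Eg_def by auto

lemma row_walk:
  assumes "j < n" shows "q \<le> n*n \<Longrightarrow> \<exists>s\<le>2*q. walk Eg (enc (Bus j 0)) (enc (Bus j (2*q))) s"
proof (induction q)
  case 0 then show ?case using walk_refl by auto
next
  case (Suc q)
  then obtain s where s: "s \<le> 2*q" "walk Eg (enc (Bus j 0)) (enc (Bus j (2*q))) s" by auto
  have q: "q < n*n" using Suc by simp
  show ?case
  proof (cases "present j q")
    case True
    have "HX j (2*q) (2*q+1)" "HX j (2*q+1) (2*q+2)" using True q unfolding HX_def by blast+
    then have h: "(Bus j (2*q), Bus j (2*q+1)) \<in> EN" "(Bus j (2*q+1), Bus j (2*q+2)) \<in> EN"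
      using assms unfolding EN_def by blast+
    have "walk Eg (enc (Bus j (2*q))) (enc (Bus j (2*q+1))) 1" using walk_edge[OF EN_edge[OF h(1)]] by simp
    moreover have "walk Eg (enc (Bus j (2*q+1))) (enc (Bus j (2*q+2))) 1" using walk_edge[OF EN_edge[OF h(2)]] by simp
    ultimately have "walk Eg (enc (Bus j (2*q))) (enc (Bus j (2*q+1))) 1" "walk Eg (enc (Bus j (2*q+1))) (enc (Bus j (2*q+2))) 1"
      by blast+
    then have "walk Eg (enc (Bus j 0)) (enc (Bus j (2*q+2))) (s + 1 + 1)"
      by (metis walk_trans s(2))
    then have "walk Eg (enc (Bus j 0)) (enc (Bus j (2*Suc q))) (s + 1 + 1)" by simp
    then show ?thesis using s(1) by (intro exI[of _ "s+1+1"]) auto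
  next
    case False
    have "HX j (2*q) (2*q+2)" using False q unfolding HX_def by blast
    then have h: "(Bus j (2*q), Bus j (2*q+2)) \<in> EN" using assms unfolding EN_def by blast
    have "walk Eg (enc (Bus j (2*q))) (enc (Bus j (2*q+2))) 1"
      using walk_edge[OF EN_edge[OF h]] by simp
    then have "walk Eg (enc (Bus j 0)) (enc (Bus j (2*q+2))) (s + 1)"
      by (metis walk_trans s(2))
    then have "walk Eg (enc (Bus j 0)) (enc (Bus j (2*Suc q))) (s + 1)" by simp
    then show ?thesis using s(1) by (intro exI[of _ "s+1"]) auto
  qed
qed

lemma vert_walk:
  assumes "hedge m" shows "t \<le> ell \<Longrightarrow> walk Eg (enc (PP m 0)) (enc (PP m t)) t"
proof (induction t)
  case 0 show ?case by (rule walk_refl)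
next
  case (Suc t)
  have "t < ell" using Suc(2) by simp
  then have h: "(PP m t, PP m (Suc t)) \<in> EN" using assms unfolding EN_def by blast
  have e: "walk Eg (enc (PP m t)) (enc (PP m (Suc t))) 1" using walk_edge[OF EN_edge[OF h]] by simp
  have "walk Eg (enc (PP m 0)) (enc (PP m t)) t" using Suc.IH \<open>t < ell\<close> by simp
  from walk_trans[OF this e] show ?case by simp
qed

lemma gd_upper:
  assumes ab: "a < b" "b < n" and adj: "adj a b"
  shows "gd Eg (enc (Bus a 0)) (enc (Bus b 0)) \<le> ereal (2 * real ell)"
proof -
  define m where "m = a * n + b"
  have npos: "n > 0" using ab by simp
  have mdiv: "m div n = a" "m mod n = b" unfolding m_def using ab by auto
  have "m < n * n"
  proof -
    have "a * n + b < a * n + n" using ab by simp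
    also have "\<dots> = (a + 1) * n" by simp
    also have "\<dots> \<le> n * n" using ab by (intro mult_le_mono1) simp
    finally show ?thesis unfolding m_def .
  qed
  then have hm: "hedge m" unfolding hedge_def using mdiv ab adj by simp
  have pa: "present a m" "present b m" unfolding present_def using hm mdiv by auto
  obtain s1 where s1: "s1 \<le> 2*m" "walk Eg (enc (Bus a 0)) (enc (Bus a (2*m))) s1"
    using row_walk[of a m] ab \<open>m < n*n\<close> by auto
  obtain s2 where s2: "s2 \<le> 2*m" "walk Eg (enc (Bus b 0)) (enc (Bus b (2*m))) s2"
    using row_walk[of b m] ab \<open>m < n*n\<close> by auto
  have "HX a (2*m) (2*m+1)" "HX b (2*m) (2*m+1)" using pa \<open>m < n*n\<close> unfolding HX_def by blast+
  then have h: "(Bus a (2*m), Bus a (2*m+1)) \<in> EN" "(Bus b (2*m), Bus b (2*m+1)) \<in> EN"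
    using ab unfolding EN_def by auto
  have e1: "walk Eg (enc (Bus a (2*m))) (enc (Bus a (2*m+1))) 1"
    using walk_edge[OF EN_edge[OF h(1)]] by simp
  have e2: "walk Eg (enc (Bus b (2*m))) (enc (Bus b (2*m+1))) 1"
    using walk_edge[OF EN_edge[OF h(2)]] by simp
  have "PP m 0 = Bus a (2*m+1)" "PP m ell = Bus b (2*m+1)" unfolding PP_def using mdiv ell_pos by auto
  then have v: "walk Eg (enc (Bus a (2*m+1))) (enc (Bus b (2*m+1))) ell"
    using vert_walk[OF hm, of ell] by simp
  have "walk Eg (enc (Bus a 0)) (enc (Bus b 0)) (s1 + 1 + ell + 1 + s2)"
    by (rule walk_trans[OF walk_trans[OF walk_trans[OF walk_trans[OF s1(2) e1] v] walk_sym[OF e2]] walk_sym[OF s2(2)]])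
  then have "gd Eg (enc (Bus a 0)) (enc (Bus b 0)) \<le> ereal (real (s1 + 1 + ell + 1 + s2))" by (rule gd_le_walk)
  also have "\<dots> \<le> ereal (2 * real ell)"
  proof -
    have "4 * m + 2 < ell" using \<open>m < n*n\<close> ell_big by linarith
    then have "s1 + 1 + ell + 1 + s2 \<le> 2 * ell" using s1(1) s2(1) by linarith
    then show ?thesis by simp
  qed
  finally show ?thesis .
qed

end




lemma pow_bound: fixes a :: nat assumes "a \<ge> 1" shows "a ^ d * (a + d) \<le> (a + 1) ^ d * a"
proof (induction d)
  case 0 then show ?case by simp
next
  case (Suc d)
  have "a ^ Suc d * (a + Suc d) = a * (a ^ d * (a + d)) + a ^ d * a" by (simp add: algebra_simps)
  also have "\<dots> \<le> a * ((a + 1) ^ d * a) + (a + 1) ^ d * a"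
    using Suc.IH by (intro add_mono mult_le_mono2 mult_le_mono1 power_mono) auto
  also have "\<dots> = (a + 1) ^ Suc d * a" by (simp add: algebra_simps)
  finally show ?case .
qed

lemma pow_choice: fixes D K :: nat shows "(K + 2) * (D + 1) ^ ((K + 1) * (D + 1)) \<le> (D + 2) ^ ((K + 1) * (D + 1))"
proof -
  define a where "a = D + 1"
  define d where "d = (K + 1) * a"
  have "a ^ d * (a + d) \<le> (a + 1) ^ d * a" using pow_bound[of a d] a_def by simp
  moreover have "a + d = a * (K + 2)" unfolding d_def by (simp add: algebra_simps)
  ultimately have "a * ((K + 2) * a ^ d) \<le> a * (a + 1) ^ d" by (simp add: algebra_simps)
  moreover have "0 < a" using a_def by simp
  ultimately have "(K + 2) * a ^ d \<le> (a + 1) ^ d" using mult_le_cancel1 by blast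
  then show ?thesis unfolding a_def d_def by (simp add: add.commute)
qed

theorem theorem5p9:
  shows "\<not> (\<exists>k :: int. AN_dim_le finite_one_planar_graphs k)"
proof
  assume "\<exists>k :: int. AN_dim_le finite_one_planar_graphs k"
  then obtain k :: int and c :: real where c: "c > 0"
    and H: "\<forall>(V, E)\<in>finite_one_planar_graphs. control_function V E k (\<lambda>r. c * r)"
    unfolding AN_dim_le_def by blast
  define K where "K = nat (k + 1)"
  define D where "D = nat \<lfloor>4 * c\<rfloor>"
  define d where "d = (K + 1) * (D + 1)"
  define N where "N = D + 2"
  define P where "P = boxP d N"
  have pw: "(K + 2) * (D + 1) ^ d \<le> (D + 2) ^ d" unfolding d_def by (rule pow_choice)
  have finP: "finite P" unfolding P_def by (rule finite_boxP)
  define n where "n = card P"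
  obtain h where h: "bij_betw h P {0..<n}" using ex_bij_betw_finite_nat[OF finP] n_def by blast
  define g where "g = inv_into P h"
  have jP: "j \<in> h ` P" if "j < n" for j using that h unfolding bij_betw_def by auto
  have gP: "g j \<in> P" if "j < n" for j
    unfolding g_def by (rule inv_into_into[OF jP[OF that]])
  have hg: "h (g j) = j" if "j < n" for j
    unfolding g_def by (rule f_inv_into_f[OF jP[OF that]])
  have gh: "g (h x) = x" if "x \<in> P" for x
    using that h unfolding g_def bij_betw_def by (simp add: inv_into_f_f)
  have hP: "h x < n" if "x \<in> P" for x using that h unfolding bij_betw_def by auto
  define adj where "adj a b \<longleftrightarrow> a \<noteq> b \<and> a < n \<and> b < n \<and> (\<forall>i<d. \<bar>int (g a i) - int (g b i)\<bar> \<le> 1)" for a b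
  obtain ell :: nat where ell: "prime ell" "4 * n * n + 2 < ell" using bigger_prime by blast
  interpret sg n adj ell using ell by unfold_locales
  have "(Vg, Eg) \<in> finite_one_planar_graphs"
    unfolding finite_one_planar_graphs_def one_planar_def using graph drawing by blast
  then have cf: "control_function Vg Eg k (\<lambda>r. c * r)" using H by blast
  define b where "b x = enc (Bus (h x) 0)" for x
  define R where "R = b ` P"
  have bV: "b x \<in> Vg" if "x \<in> P" for x
  proof -
    have "Bus (h x) (2*0) \<in> VN" unfolding VN_def using hP[OF that] by blast
    then show ?thesis unfolding b_def Vg_def by simp
  qed
  have injb: "inj_on b P"
  proof (rule inj_onI)
    fix x y assume "x \<in> P" "y \<in> P" "b x = b y"
    then have "h x = h y" unfolding b_def using inj_enc by (auto dest: injD)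
    then show "x = y" using gh \<open>x \<in> P\<close> \<open>y \<in> P\<close> by metis
  qed
  have Pne: "P \<noteq> {}"
  proof -
    have "{..<N} \<noteq> {}" unfolding N_def by auto
    then show ?thesis unfolding P_def boxP_def by (simp add: PiE_eq_empty_iff)
  qed
  have "\<not> control_function Vg Eg k (\<lambda>r. c * r)"
  proof (rule no_control[where R=R and r="4 * real ell"])
    show "finite Vg" using graph unfolding finite_graph_def by blast
    show "R \<subseteq> Vg" unfolding R_def using bV by blast
    show "R \<noteq> {}" unfolding R_def using Pne by blast
    show "(0::real) < 4 * real ell" using ell_pos by simp
  next
    fix A assume AV: "A \<subseteq> Vg" and diam: "\<forall>x\<in>A. \<forall>y\<in>A. gd Eg x y \<le> ereal (c * (4 * real ell))"
    show "(nat (k + 1) + 1) * card (A \<inter> R) \<le> card ({v \<in> Vg. \<exists>a\<in>A. gd Eg a v \<le> ereal (4 * real ell / 2)} \<inter> R)"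
    proof -
      define J where "J = {x\<in>P. b x \<in> A}"
      have JP: "J \<subseteq> P" unfolding J_def by auto
      have AR: "A \<inter> R = b ` J" unfolding J_def R_def by auto
      have cJ: "card (A \<inter> R) = card J" unfolding AR using inj_on_subset[OF injb JP] by (rule card_image)
      have D4: "int D = \<lfloor>4 * c\<rfloor>" unfolding D_def using c by simp
      have spread: "\<forall>i<d. \<forall>x\<in>J. \<forall>y\<in>J. \<bar>int (x i) - int (y i)\<bar> \<le> int D"
      proof (intro allI impI ballI)
        fix i x y assume i: "i < d" and x: "x \<in> J" and y: "y \<in> J"
        define f where "f j = real (g j i)" for j
        have lip: "\<bar>f (m div n) - f (m mod n)\<bar> \<le> 1" if "hedge m" for m
        proof -
          have "adj (m div n) (m mod n)" using that unfolding hedge_def by simp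
          then have "\<bar>int (g (m div n) i) - int (g (m mod n) i)\<bar> \<le> 1" using i unfolding adj_def by blast
          then show ?thesis unfolding f_def by linarith
        qed
        have "ereal (real ell * \<bar>f (h x) - f (h y)\<bar>) \<le> gd Eg (b x) (b y)"
          using gd_lower[OF lip] unfolding b_def by blast
        also have "\<dots> \<le> ereal (c * (4 * real ell))" using diam x y unfolding J_def by blast
        finally have "real ell * \<bar>f (h x) - f (h y)\<bar> \<le> c * (4 * real ell)" by simp
        then have "real ell * \<bar>f (h x) - f (h y)\<bar> \<le> real ell * (4 * c)" by (simp add: algebra_simps)
        then have "\<bar>f (h x) - f (h y)\<bar> \<le> 4 * c" using ell_pos by simp
        moreover have "f (h x) = real (x i)" "f (h y) = real (y i)"
          unfolding f_def using gh x y JP by auto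
        ultimately have "real_of_int \<bar>int (x i) - int (y i)\<bar> \<le> 4 * c" by simp
        then have "\<bar>int (x i) - int (y i)\<bar> \<le> \<lfloor>4 * c\<rfloor>" by (simp add: le_floor_iff)
        then show "\<bar>int (x i) - int (y i)\<bar> \<le> int D" using D4 by simp
      qed
      have bg: "(D + 2) ^ d * card J \<le> (D + 1) ^ d * card (KNb d N J)"
        using box_growth[OF JP[unfolded P_def] _ spread] unfolding N_def by simp
      have "(D + 1) ^ d * ((K + 2) * card J) = ((K + 2) * (D + 1) ^ d) * card J" by (simp only: ac_simps)
      also have "\<dots> \<le> (D + 2) ^ d * card J" using pw by (rule mult_le_mono1)
      also have "\<dots> \<le> (D + 1) ^ d * card (KNb d N J)" by (rule bg)
      finally have "(D + 1) ^ d * ((K + 2) * card J) \<le> (D + 1) ^ d * card (KNb d N J)" .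
      then have kn: "(K + 2) * card J \<le> card (KNb d N J)" using mult_le_cancel1 by fastforce
      define Nb where "Nb = {v \<in> Vg. \<exists>a\<in>A. gd Eg a v \<le> ereal (4 * real ell / 2)}"
      have KP: "KNb d N J \<subseteq> P" unfolding KNb_def P_def by auto
      have sub: "b ` KNb d N J \<subseteq> Nb \<inter> R"
      proof
        fix v assume "v \<in> b ` KNb d N J"
        then obtain y where yK: "y \<in> KNb d N J" and v: "v = b y" by auto
        have yP: "y \<in> P" using yK KP by auto
        obtain x where xJ: "x \<in> J" and close: "\<forall>i<d. \<bar>int (x i) - int (y i)\<bar> \<le> 1"
          using yK unfolding KNb_def by auto
        have xP: "x \<in> P" using xJ JP by auto
        have bxA: "b x \<in> A" using xJ unfolding J_def by auto
        have "gd Eg (b x) (b y) \<le> ereal (2 * real ell)"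
        proof (cases "x = y")
          case True
          then have "gd Eg (b x) (b y) \<le> ereal (real 0)" using walk_refl gd_le_walk by metis
          then show ?thesis using ell_pos by (simp add: order_trans)
        next
          case False
          then have hne: "h x \<noteq> h y" using gh xP yP by metis
          have adjxy: "adj (h x) (h y)" "adj (h y) (h x)"
            using hne hP[OF xP] hP[OF yP] close gh[OF xP] gh[OF yP] unfolding adj_def
            by (auto simp: abs_minus_commute)
          show ?thesis
          proof (cases "h x < h y")
            case True
            then show ?thesis using gd_upper[OF True hP[OF yP] adjxy(1)] unfolding b_def by simp
          next
            case False
            then have "h y < h x" using hne by simp
            then show ?thesis using gd_upper[OF _ hP[OF xP] adjxy(2)] gd_sym unfolding b_def by metis
          qed
        qed
        then have "gd Eg (b x) v \<le> ereal (4 * real ell / 2)" using v by simp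
        then show "v \<in> Nb \<inter> R" unfolding Nb_def R_def using bV[OF yP] bxA v yP by blast
      qed
      have finNb: "finite (Nb \<inter> R)" unfolding R_def using finP by simp
      have "card (KNb d N J) = card (b ` KNb d N J)" using inj_on_subset[OF injb KP] by (simp add: card_image)
      also have "\<dots> \<le> card (Nb \<inter> R)" using sub finNb by (rule card_mono[rotated])
      finally have "card (KNb d N J) \<le> card (Nb \<inter> R)" .
      then have "(K + 2) * card J \<le> card (Nb \<inter> R)" using kn by linarith
      then show ?thesis unfolding cJ Nb_def K_def by simp
    qed
  qed
  then show False using cf by simp
qed


end
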